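(* For each $m \ge 2$ let $F_m \in \mathbb{R}^3$ be the vector of uniform expected payoffs of the imbalanced $(m,3)$-RPS. Then there exist vectors $u_m \in \mathbb{R}^3$ such that, for every $m$, $u_m$ majorizes the vector of uniform expected payoffs of every $(m,3)$-RPS game, and $\|F_m - u_m\| \to 0$ as $m \to \infty$ (indeed at an exponential rate of order $m(2/3)^{m}$).
   Context: An $(m,n)$-RPS game is a symmetric, zero-sum, win/lose game with $m$ players and $n$ pure strategies ("objects"), played without collusion. The rules assign to every multiset $c$ of $m$ chosen objects a single winning object $\phi(c)\in c$; every player who chose $\phi(c)$ wins and every other player loses. If there are $m'$ winners, each winner receives payoff $\frac{m-m'}{m'}$ and each loser receives payoff $-1$. The uniform expected payoff of an object $o$ is the expected payoff of a player who chooses $o$ while each of the other $m-1$ players independently chooses an object uniformly at random. The vector of uniform expected payoffs lists these values over all objects; majorization is the standard majorization order on vectors (comparing sorted partial sums, with equal total sums). The imbalanced $(m,3)$-RPS has objects $R,P,S$ with the following rules: any multiset containing at least one $S$ and at least one $R$ is won by $R$; any multiset containing only $R$'s and $P$'s (with at least one of each) is won by $P$; any multiset containing only $P$'s and $S$'s (with at least one of each) is won by $S$; a multiset consisting of a single object type is won by that object. *)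

theory Defs
  imports "HOL-Analysis.Analysis" "HOL-Library.Multiset" "HOL-Library.Landau_Symbols"
begin

text \<open>An (m,n)-RPS game on a finite object type 'a: a rule assigning to every
  multiset of m chosen objects a winning object occurring in it.\<close>
definition is_RPS :: "nat \<Rightarrow> ('a::finite multiset \<Rightarrow> 'a) \<Rightarrow> bool" where
  "is_RPS m \<phi> \<longleftrightarrow> (\<forall>c. size c = m \<longrightarrow> \<phi> c \<in># c)"

definition rps_payoff :: "nat \<Rightarrow> ('a multiset \<Rightarrow> 'a) \<Rightarrow> 'a multiset \<Rightarrow> 'a \<Rightarrow> real" where
  "rps_payoff m \<phi> c a =
     (if \<phi> c = a then (real m - real (count c a)) / real (count c a) else -1)"

text \<open>Uniform expected payoff: the other m-1 players choose independently and
  uniformly at random (average over all lists of their choices).\<close>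
definition uniform_payoff :: "nat \<Rightarrow> ('a::finite multiset \<Rightarrow> 'a) \<Rightarrow> 'a \<Rightarrow> real" where
  "uniform_payoff m \<phi> a =
     (\<Sum>ys\<in>{ys::'a list. length ys = m - 1}. rps_payoff m \<phi> (add_mset a (mset ys)) a)
       / real (CARD('a)) ^ (m - 1)"

definition payoff_vec :: "nat \<Rightarrow> ('n::finite multiset \<Rightarrow> 'n) \<Rightarrow> real^'n" where
  "payoff_vec m \<phi> = (\<chi> a. uniform_payoff m \<phi> a)"

definition top_sum :: "nat \<Rightarrow> (real, 'n::{finite,linorder}) vec \<Rightarrow> real" where
  "top_sum k x = sum_list (take k (rev (sort (map (\<lambda>i. x $ i) (sorted_list_of_set (UNIV::'n set))))))"

definition majorizes :: "(real, 'n::{finite,linorder}) vec \<Rightarrow> (real, 'n) vec \<Rightarrow> bool" where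
  "majorizes x y \<longleftrightarrow> (\<forall>k \<le> card (UNIV :: 'n set). top_sum k y \<le> top_sum k x)
                       \<and> (\<Sum>i\<in>UNIV. x $ i) = (\<Sum>i\<in>UNIV. y $ i)"

abbreviation objR :: 3 where "objR \<equiv> 0"
abbreviation objP :: 3 where "objP \<equiv> 1"
abbreviation objS :: 3 where "objS \<equiv> 2"

definition imbalanced :: "3 multiset \<Rightarrow> 3" where
  "imbalanced c =
     (if objR \<in># c \<and> objS \<in># c then objR
      else if objR \<in># c \<and> objP \<in># c then objP
      else if objP \<in># c \<and> objS \<in># c then objS
      else if objR \<in># c then objR
      else if objP \<in># c then objP
      else objS)"

end

theory Submission
  imports Defs "HOL-Real_Asymp.Real_Asymp"
begin

lemma lt3: "(0::3) < 1" "(1::3) < 2" "(0::3) < 2"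
  unfolding less_bit1_def bit1.Rep_0 bit1.Rep_1 bit1.Rep_numeral by simp_all
lemma UNIV3: "(UNIV::3 set) = {0,1,2}"
proof -
  have "x = 0 \<or> x = 1 \<or> x = 2" for x :: 3
    using exhaust_3[of x] by auto
  then show ?thesis by auto
qed
lemma sl3: "sorted_list_of_set (UNIV::3 set) = [0,1,2]"
proof -
  have "sorted_wrt (<) [0::3,1,2]" using lt3 by simp
  moreover have "set [0::3,1,2] = UNIV" using UNIV3 by simp
  moreover have "length [0::3,1,2] = card (UNIV::3 set)" by simp
  ultimately show ?thesis using sorted_list_of_set_unique[of "UNIV::3 set" "[0,1,2]"] by simp
qed
lemma ts3:
  fixes a b c :: real
  shows "sum_list (take 1 (rev (sort [a,b,c]))) = max a (max b c)"
    "sum_list (take 2 (rev (sort [a,b,c]))) = a+b+c - min a (min b c)"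
    "sum_list (take 3 (rev (sort [a,b,c]))) = a+b+c"
  by (cases "a \<le> b"; cases "b \<le> c"; cases "a \<le> c"; simp add: max_def min_def)+

lemma top3:
  fixes x :: "real^3"
  shows "top_sum 1 x = max (x$0) (max (x$1) (x$2))"
    "top_sum 2 x = x$0+x$1+x$2 - min (x$0) (min (x$1) (x$2))"
    "top_sum 3 x = x$0+x$1+x$2" "top_sum 0 x = 0"
  unfolding top_sum_def sl3 by (simp_all only: list.map ts3) simp

lemma maj3:
  fixes u y :: "real^3"
  assumes "\<And>i. y$i \<le> u$0" "\<And>i. u$2 \<le> y$i" "(\<Sum>i\<in>UNIV. u $ i) = (\<Sum>i\<in>UNIV. y $ i)"
  shows "majorizes u y"
proof -
  have s: "u$0+u$1+u$2 = y$0+y$1+y$2" using assms(3) unfolding UNIV3 by simp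
  have c: "card (UNIV::3 set) = 3" by simp
  show ?thesis unfolding majorizes_def c
  proof (intro conjI allI impI)
    fix k :: nat assume "k \<le> 3"
    then consider "k=0" | "k=1" | "k=2" | "k=3" by linarith
    then show "top_sum k y \<le> top_sum k u"
    proof cases
      case 1 then show ?thesis unfolding \<open>k=0\<close> top3 by simp
    next
      case 2 then show ?thesis using assms(1)[of 0] assms(1)[of 1] assms(1)[of 2]
        unfolding \<open>k=1\<close> top3 by (auto simp: le_max_iff_disj)
    next
      case 3 then show ?thesis using assms(2)[of 0] assms(2)[of 1] assms(2)[of 2] s
        unfolding \<open>k=2\<close> top3 by linarith
    next
      case 4 then show ?thesis using s
        unfolding \<open>k=3\<close> top3 by linarith
    qed
  qed (fact assms(3))
qed

lemma finL: "finite {ys::'a::finite list. length ys = n}"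
  using finite_lists_length_eq[of "UNIV::'a set" n] by simp

lemma cardL: "card {ys::'a::finite list. length ys = n} = CARD('a) ^ n"
  using card_lists_length_eq[of "UNIV::'a set" n] by simp

lemma card_avoid: "card {ys::3 list. length ys = n \<and> x \<notin> set ys} = 2 ^ n"
proof -
  have "{ys::3 list. length ys = n \<and> x \<notin> set ys} = {ys. set ys \<subseteq> UNIV - {x} \<and> length ys = n}"
    by auto
  moreover have "card (UNIV - {x::3}) = 2" by (simp add: card_Diff_singleton)
  ultimately show ?thesis using card_lists_length_eq[of "UNIV - {x::3}" n] by simp
qed

lemma count_swap:
  fixes x y :: 'a
  defines "\<sigma> \<equiv> (\<lambda>z. if z = x then y else if z = y then x else z)"
  shows "count_list (map \<sigma> ys) y = count_list ys x"
  by (induction ys) (auto simp: \<sigma>_def)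

lemma sym_sum:
  fixes x y :: "'a::finite" and h :: "nat \<Rightarrow> real"
  shows "(\<Sum>ys\<in>{ys::'a list. length ys = n}. h (count_list ys x))
       = (\<Sum>ys\<in>{ys::'a list. length ys = n}. h (count_list ys y))"
proof -
  define \<sigma> where "\<sigma> \<equiv> (\<lambda>z. if z = x then y else if z = y then x else z)"
  have inv: "map (\<sigma> \<circ> \<sigma>) ys = ys" for ys
    by (induction ys) (auto simp: \<sigma>_def)
  have b: "bij_betw (map \<sigma>) {ys::'a list. length ys = n} {ys::'a list. length ys = n}"
    by (rule bij_betw_byWitness[where f'="map \<sigma>"]) (auto simp: inv)
  have "(\<Sum>ys\<in>{ys::'a list. length ys = n}. h (count_list ys y))
     = (\<Sum>ys\<in>{ys::'a list. length ys = n}. h (count_list (map \<sigma> ys) y))"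
    using sum.reindex_bij_betw[OF b, of "\<lambda>ys. h (count_list ys y)"] by simp
  also have "\<dots> = (\<Sum>ys\<in>{ys::'a list. length ys = n}. h (count_list ys x))"
    unfolding \<sigma>_def count_swap ..
  finally show ?thesis by simp
qed


lemma sl_count:
  fixes g :: "'a::finite \<Rightarrow> real"
  shows "sum_list (map g xs) = (\<Sum>a\<in>UNIV. real (count_list xs a) * g a)"
proof (induction xs)
  case Nil then show ?case by simp
next
  case (Cons x xs)
  have "(\<Sum>a\<in>UNIV. real (count_list (x # xs) a) * g a)
      = (\<Sum>a\<in>UNIV. real (count_list xs a) * g a + (if a = x then g a else 0))"
    by (rule sum.cong) (auto simp: algebra_simps)
  also have "\<dots> = (\<Sum>a\<in>UNIV. real (count_list xs a) * g a) + g x"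
    by (simp add: sum.distrib)
  finally show ?case using Cons by simp
qed

lemma per_list_zero:
  fixes \<phi> :: "'a::finite multiset \<Rightarrow> 'a"
  assumes "\<phi> (mset xs) \<in># mset xs" "length xs = m"
  shows "(\<Sum>i<m. rps_payoff m \<phi> (mset xs) (xs ! i)) = 0"
proof -
  define w where "w = \<phi> (mset xs)"
  define g where "g = (\<lambda>a. rps_payoff m \<phi> (mset xs) a)"
  have "(\<Sum>i<m. g (xs ! i)) = sum_list (map g xs)"
    using assms(2) by (simp add: sum_list_sum_nth atLeast0LessThan)
  also have "\<dots> = (\<Sum>a\<in>UNIV. real (count_list xs a) * g a)"
    by (rule sl_count)
  also have "\<dots> = (\<Sum>a\<in>UNIV. (if a = w then real m else 0) - real (count_list xs a))"
  proof (rule sum.cong[OF refl])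
    fix a
    have pos: "count_list xs w > 0" using assms(1) unfolding w_def
      by (simp add: count_mset[symmetric])
    show "real (count_list xs a) * g a = (if a = w then real m else 0) - real (count_list xs a)"
      using pos unfolding g_def rps_payoff_def w_def[symmetric]
      by (auto simp: count_mset field_simps)
  qed
  also have "\<dots> = real m - (\<Sum>a\<in>UNIV. real (count_list xs a))"
    by (simp add: sum_subtractf)
  also have "(\<Sum>a\<in>UNIV. real (count_list xs a)) = real (length xs)"
    using sl_count[of "\<lambda>_. 1::real" xs] by (simp add: sum_list_triv)
  finally show ?thesis using assms(2) unfolding g_def by simp
qed

lemma mset_rot1: "mset (rotate1 xs) = mset xs"
  by (cases xs) simp_all

lemma zero_sum:
  fixes \<phi> :: "'a::finite multiset \<Rightarrow> 'a"
  assumes rps: "is_RPS m \<phi>" and m: "m \<ge> 1"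
  shows "(\<Sum>a\<in>UNIV. uniform_payoff m \<phi> a) = 0"
proof -
  define L where "L = {xs::'a list. length xs = m}"
  define P where "P = (\<lambda>xs i. rps_payoff m \<phi> (mset xs) (xs ! i))"
  have finL': "finite L" unfolding L_def by (rule finL)
  have b: "bij_betw (\<lambda>(a, ys). a # ys) (UNIV \<times> {ys::'a list. length ys = m - 1}) L"
  proof (rule bij_betw_byWitness[where f'="\<lambda>xs. (hd xs, tl xs)"])
    show "\<forall>p\<in>UNIV \<times> {ys::'a list. length ys = m - 1}. (\<lambda>xs. (hd xs, tl xs)) ((\<lambda>(a, ys). a # ys) p) = p"
      by auto
    show "\<forall>xs\<in>L. (\<lambda>(a, ys). a # ys) (hd xs, tl xs) = xs"
    proof
      fix xs assume "xs \<in> L"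
      then have "xs \<noteq> []" using m by (auto simp: L_def)
      then show "(\<lambda>(a, ys). a # ys) (hd xs, tl xs) = xs" by simp
    qed
    show "(\<lambda>(a, ys). a # ys) ` (UNIV \<times> {ys::'a list. length ys = m - 1}) \<subseteq> L"
      using m by (auto simp: L_def)
    show "(\<lambda>xs. (hd xs, tl xs)) ` L \<subseteq> UNIV \<times> {ys::'a list. length ys = m - 1}"
      by (auto simp: L_def)
  qed
  have step1: "(\<Sum>a\<in>UNIV. \<Sum>ys\<in>{ys::'a list. length ys = m - 1}. rps_payoff m \<phi> (add_mset a (mset ys)) a)
       = (\<Sum>xs\<in>L. P xs 0)"
  proof -
    have "(\<Sum>a\<in>UNIV. \<Sum>ys\<in>{ys::'a list. length ys = m - 1}. rps_payoff m \<phi> (add_mset a (mset ys)) a)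
        = (\<Sum>(a,ys)\<in>UNIV \<times> {ys::'a list. length ys = m - 1}. P (a # ys) 0)"
      by (subst sum.cartesian_product) (simp add: P_def)
    also have "\<dots> = (\<Sum>xs\<in>L. P xs 0)"
      using sum.reindex_bij_betw[OF b, of "\<lambda>xs. P xs 0"] by (simp add: case_prod_unfold)
    finally show ?thesis .
  qed
  have br: "bij_betw rotate1 L L"
  proof (rule bij_betw_imageI)
    show "inj_on rotate1 L" using inj_rotate1 by (rule inj_on_subset) simp
    show "rotate1 ` L = L"
    proof
      show "rotate1 ` L \<subseteq> L" by (auto simp: L_def)
      show "L \<subseteq> rotate1 ` L"
      proof
        fix xs assume "xs \<in> L"
        obtain ys where "xs = rotate1 ys" using surj_rotate1 by (metis surjD)
        then show "xs \<in> rotate1 ` L" using \<open>xs \<in> L\<close> by (auto simp: L_def)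
      qed
    qed
  qed
  have shift: "(\<Sum>xs\<in>L. P xs i) = (\<Sum>xs\<in>L. P xs 0)" if "i < m" for i
    using that
  proof (induction i)
    case 0 then show ?case by simp
  next
    case (Suc i)
    have "(\<Sum>xs\<in>L. P xs i) = (\<Sum>xs\<in>L. P (rotate1 xs) i)"
      using sum.reindex_bij_betw[OF br, of "\<lambda>xs. P xs i"] by simp
    also have "\<dots> = (\<Sum>xs\<in>L. P xs (Suc i))"
      by (rule sum.cong[OF refl]) (use Suc.prems in \<open>auto simp: P_def L_def nth_rotate1 mset_rot1\<close>)
    finally show ?case using Suc by simp
  qed
  have "(\<Sum>i<m. \<Sum>xs\<in>L. P xs i) = (\<Sum>i<m. \<Sum>xs\<in>L. P xs 0)"
    by (rule sum.cong[OF refl], rule shift, simp)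
  then have "real m * (\<Sum>xs\<in>L. P xs 0) = (\<Sum>i<m. \<Sum>xs\<in>L. P xs i)"
    by simp
  also have "\<dots> = (\<Sum>xs\<in>L. \<Sum>i<m. P xs i)" by (rule sum.swap)
  also have "\<dots> = 0"
  proof (rule sum.neutral, rule ballI)
    fix xs assume xs: "xs \<in> L"
    then have "\<phi> (mset xs) \<in># mset xs" using rps unfolding L_def is_RPS_def
      by (metis mem_Collect_eq size_mset)
    then show "(\<Sum>i<m. P xs i) = 0" unfolding P_def
      using per_list_zero[of \<phi> xs m] xs by (simp add: L_def)
  qed
  finally have "(\<Sum>xs\<in>L. P xs 0) = 0" using m by simp
  then show ?thesis unfolding uniform_payoff_def using step1
    by (simp add: sum_divide_distrib[symmetric])
qed


definition Aup :: "nat \<Rightarrow> real" where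
  "Aup m = (\<Sum>ys\<in>{ys::3 list. length ys = m - 1}. real m / real (Suc (count_list ys 0)) - 1) / 3 ^ (m - 1)"

definition cm :: "nat \<Rightarrow> real" where
  "cm m = -1 + 1 / 3 ^ (m - 1)"

definition uvec :: "nat \<Rightarrow> real^3" where
  "uvec m = (\<chi> i. if i = 0 then Aup m else if i = 1 then - Aup m - cm m else cm m)"

lemma uvec_simps: "uvec m $ 0 = Aup m" "uvec m $ 1 = - Aup m - cm m" "uvec m $ 2 = cm m"
  by (simp_all add: uvec_def)

lemma unif_eq: "uniform_payoff m (\<phi>::3 multiset \<Rightarrow> 3) x =
   (\<Sum>ys\<in>{ys::3 list. length ys = m - 1}. rps_payoff m \<phi> (add_mset x (mset ys)) x) / 3 ^ (m - 1)"
  by (simp add: uniform_payoff_def)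

lemma cnt: "count (add_mset x (mset ys)) x = Suc (count_list ys x)"
  by (simp add: count_mset)

lemma rps_ge: "rps_payoff m \<phi> (add_mset x (mset ys)) x \<ge> -1"
  unfolding rps_payoff_def cnt by (simp add: diff_divide_distrib)

lemma rps_le: "rps_payoff m \<phi> (add_mset x (mset ys)) x \<le> real m / real (Suc (count_list ys x)) - 1"
  unfolding rps_payoff_def cnt by (simp add: diff_divide_distrib)

lemma mdiv_le: "real m / real (Suc k) \<le> real m"
  by (simp add: divide_le_eq mult_le_cancel_left1)

lemma upper:
  fixes \<phi> :: "3 multiset \<Rightarrow> 3"
  shows "uniform_payoff m \<phi> x \<le> Aup m"
proof -
  have "(\<Sum>ys\<in>{ys::3 list. length ys = m - 1}. rps_payoff m \<phi> (add_mset x (mset ys)) x)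
      \<le> (\<Sum>ys\<in>{ys::3 list. length ys = m - 1}. real m / real (Suc (count_list ys x)) - 1)"
    by (rule sum_mono) (rule rps_le)
  also have "\<dots> = (\<Sum>ys\<in>{ys::3 list. length ys = m - 1}. real m / real (Suc (count_list ys 0)) - 1)"
    by (rule sym_sum)
  finally show ?thesis unfolding unif_eq Aup_def by (simp add: divide_right_mono)
qed

lemma lower:
  fixes \<phi> :: "3 multiset \<Rightarrow> 3"
  assumes rps: "is_RPS m \<phi>" and m: "m \<ge> 1"
  shows "cm m \<le> uniform_payoff m \<phi> x"
proof -
  define L where "L = {ys::3 list. length ys = m - 1}"
  define r where "r = replicate (m - 1) x"
  have rL: "r \<in> L" by (simp add: L_def r_def)
  have "(\<Sum>ys\<in>L. (if ys = r then 1 else 0) - 1) \<le> (\<Sum>ys\<in>L. rps_payoff m \<phi> (add_mset x (mset ys)) x)"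
  proof (rule sum_mono)
    fix ys assume "ys \<in> L"
    show "(if ys = r then 1 else 0) - 1 \<le> rps_payoff m \<phi> (add_mset x (mset ys)) x"
    proof (cases "ys = r")
      case True
      have c: "add_mset x (mset ys) = replicate_mset m x"
      proof -
        obtain k where k: "m = Suc k" using m by (cases m) auto
        show ?thesis using True unfolding k r_def by simp
      qed
      have sz: "size (replicate_mset m x) = m" by simp
      have "\<phi> (replicate_mset m x) \<in># replicate_mset m x"
        using rps[unfolded is_RPS_def, rule_format, OF sz] .
      then have "\<phi> (replicate_mset m x) = x" using in_replicate_mset by fast
      then show ?thesis unfolding c rps_payoff_def using m by simp
    next
      case False then show ?thesis using rps_ge[of m \<phi> x ys] by simp
    qed
  qed
  also have "(\<Sum>ys\<in>L. (if ys = r then 1 else 0) - 1) = 1 - real (card L)"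
  proof -
    have fL: "finite L" unfolding L_def by (rule finL)
    have "(\<Sum>ys\<in>L. if ys = r then 1 else 0) = (1::real)"
      using sum.delta[OF fL, of r "\<lambda>_. 1::real"] rL by simp
    then show ?thesis by (simp add: sum_subtractf)
  qed
  also have "card L = 3 ^ (m - 1)" unfolding L_def using cardL[where 'a=3] by simp
  finally have "1 - 3 ^ (m - 1) \<le> (\<Sum>ys\<in>L. rps_payoff m \<phi> (add_mset x (mset ys)) x)" by simp
  then have "(1 - 3 ^ (m - 1)) / 3 ^ (m - 1) \<le> uniform_payoff m \<phi> x"
    unfolding unif_eq L_def[symmetric] by (simp add: divide_right_mono)
  moreover have "(1 - 3 ^ (m - 1)) / 3 ^ (m - 1) = cm m"
    unfolding cm_def by (simp add: diff_divide_distrib)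
  ultimately show ?thesis by simp
qed

lemma count_if_sum:
  fixes c :: real
  shows "(\<Sum>ys\<in>{ys::3 list. length ys = n}. if x \<notin> set ys then c else 0) = c * 2 ^ n"
proof -
  have "(\<Sum>ys\<in>{ys::3 list. length ys = n}. if x \<notin> set ys then c else 0)
       = (\<Sum>ys\<in>{ys \<in> {ys::3 list. length ys = n}. x \<notin> set ys}. c)"
    by (rule sum.inter_filter[symmetric]) (rule finL)
  also have "{ys \<in> {ys::3 list. length ys = n}. x \<notin> set ys} = {ys::3 list. length ys = n \<and> x \<notin> set ys}"
    by auto
  finally show ?thesis using card_avoid[of n x] by (simp add: mult.commute)
qed

lemma imb_RPS: "m \<ge> 1 \<Longrightarrow> is_RPS m imbalanced"
  unfolding is_RPS_def imbalanced_def
proof (intro allI impI)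
  fix c :: "3 multiset" assume "m \<ge> 1" "size c = m"
  then have "c \<noteq> {#}" by auto
  then obtain z where z: "z \<in># c" by (meson multiset_nonemptyE)
  have "z = 0 \<or> z = 1 \<or> z = 2" using UNIV3 by auto
  then show "(if objR \<in># c \<and> objS \<in># c then objR
      else if objR \<in># c \<and> objP \<in># c then objP
      else if objP \<in># c \<and> objS \<in># c then objS
      else if objR \<in># c then objR
      else if objP \<in># c then objP
      else objS) \<in># c" using z by auto
qed

lemma FR:
  assumes m: "m \<ge> 1"
  shows "Aup m - real m * 2 ^ (m - 1) / 3 ^ (m - 1) \<le> uniform_payoff m imbalanced 0"
proof -
  define L where "L = {ys::3 list. length ys = m - 1}"
  have "(\<Sum>ys\<in>L. (real m / real (Suc (count_list ys 0)) - 1) - (if 2 \<notin> set ys then real m else 0))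
      \<le> (\<Sum>ys\<in>L. rps_payoff m imbalanced (add_mset 0 (mset ys)) 0)"
  proof (rule sum_mono)
    fix ys assume "ys \<in> L"
    show "(real m / real (Suc (count_list ys 0)) - 1) - (if 2 \<notin> set ys then real m else 0)
        \<le> rps_payoff m imbalanced (add_mset 0 (mset ys)) 0"
    proof (cases "2 \<in> set ys")
      case True
      then have "imbalanced (add_mset 0 (mset ys)) = 0" by (simp add: imbalanced_def)
      then show ?thesis using True unfolding rps_payoff_def cnt by (simp add: diff_divide_distrib)
    next
      case False then show ?thesis using rps_ge[of m imbalanced 0 ys] mdiv_le[of m "count_list ys 0"]
        by simp
    qed
  qed
  also have "(\<Sum>ys\<in>L. (real m / real (Suc (count_list ys 0)) - 1) - (if 2 \<notin> set ys then real m else 0))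
     = Aup m * 3 ^ (m - 1) - real m * 2 ^ (m - 1)"
    unfolding L_def Aup_def by (simp add: sum_subtractf count_if_sum del: One_nat_def)
  finally have ineq: "Aup m * 3 ^ (m - 1) - real m * 2 ^ (m - 1)
      \<le> (\<Sum>ys\<in>L. rps_payoff m imbalanced (add_mset 0 (mset ys)) 0)" .
  have T: "(3::real) ^ (m - 1) > 0" by simp
  have eq: "Aup m - real m * 2 ^ (m - 1) / 3 ^ (m - 1) = (Aup m * 3 ^ (m - 1) - real m * 2 ^ (m - 1)) / 3 ^ (m - 1)"
    using T by (simp add: field_simps)
  have "(Aup m * 3 ^ (m - 1) - real m * 2 ^ (m - 1)) / 3 ^ (m - 1)
      \<le> (\<Sum>ys\<in>L. rps_payoff m imbalanced (add_mset 0 (mset ys)) 0) / 3 ^ (m - 1)"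
    using ineq T by (intro divide_right_mono) auto
  then show ?thesis unfolding unif_eq L_def[symmetric] eq .
qed

lemma FS:
  assumes m: "m \<ge> 1"
  shows "uniform_payoff m imbalanced 2 \<le> -1 + real m * 2 ^ (m - 1) / 3 ^ (m - 1)"
proof -
  define L where "L = {ys::3 list. length ys = m - 1}"
  have "(\<Sum>ys\<in>L. rps_payoff m imbalanced (add_mset 2 (mset ys)) 2)
      \<le> (\<Sum>ys\<in>L. (if 0 \<notin> set ys then real m else 0) - 1)"
  proof (rule sum_mono)
    fix ys assume "ys \<in> L"
    show "rps_payoff m imbalanced (add_mset 2 (mset ys)) 2 \<le> (if 0 \<notin> set ys then real m else 0) - 1"
    proof (cases "0 \<in> set ys")
      case True
      then have "imbalanced (add_mset 2 (mset ys)) = 0" by (simp add: imbalanced_def)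
      then show ?thesis using True unfolding rps_payoff_def by simp
    next
      case False then show ?thesis using rps_le[of m imbalanced 2 ys] mdiv_le[of m "count_list ys 2"]
        by simp
    qed
  qed
  also have "(\<Sum>ys\<in>L. (if 0 \<notin> set ys then real m else 0) - 1) = real m * 2 ^ (m - 1) - 3 ^ (m - 1)"
    unfolding L_def using cardL[where 'a=3, of "m - 1"] by (simp add: sum_subtractf count_if_sum del: One_nat_def)
  finally have ineq: "(\<Sum>ys\<in>L. rps_payoff m imbalanced (add_mset 2 (mset ys)) 2)
      \<le> real m * 2 ^ (m - 1) - 3 ^ (m - 1)" .
  have T: "(3::real) ^ (m - 1) > 0" by simp
  have eq: "-1 + real m * 2 ^ (m - 1) / 3 ^ (m - 1) = (real m * 2 ^ (m - 1) - 3 ^ (m - 1)) / 3 ^ (m - 1)"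
    using T by (simp add: field_simps)
  have "(\<Sum>ys\<in>L. rps_payoff m imbalanced (add_mset 2 (mset ys)) 2) / 3 ^ (m - 1)
      \<le> (real m * 2 ^ (m - 1) - 3 ^ (m - 1)) / 3 ^ (m - 1)"
    using ineq T by (intro divide_right_mono) auto
  then show ?thesis unfolding unif_eq L_def[symmetric] eq .
qed

lemma bnd:
  assumes m: "m \<ge> 1"
  shows "norm (payoff_vec m imbalanced - uvec m) \<le> 6 * (real m * (2/3) ^ m)"
proof -
  define F where "F = (\<lambda>i. uniform_payoff m imbalanced i)"
  define q where "q = real m * 2 ^ (m - 1) / 3 ^ (m - 1)"
  have rps: "is_RPS m imbalanced" using imb_RPS[OF m] .
  have s: "F 0 + F 1 + F 2 = 0" using zero_sum[OF rps m] unfolding UNIV3 F_def by simp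
  have h0: "F 0 \<le> Aup m" "Aup m - q \<le> F 0" unfolding F_def q_def using upper FR[OF m] by auto
  have h2: "cm m \<le> F 2" "F 2 \<le> -1 + q" unfolding F_def q_def using lower[OF rps m] FS[OF m] by auto
  have cmge: "cm m \<ge> -1" unfolding cm_def by simp
  have a0: "\<bar>F 0 - Aup m\<bar> \<le> q" using h0 by (simp add: abs_le_iff)
  have a2: "\<bar>F 2 - cm m\<bar> \<le> q" using h2 cmge by (simp add: abs_le_iff)
  have a1: "\<bar>F 1 + Aup m + cm m\<bar> \<le> 2 * q" using h0 h2 s cmge by (simp add: abs_le_iff)
  have "norm (payoff_vec m imbalanced - uvec m) \<le> (\<Sum>i\<in>UNIV. \<bar>(payoff_vec m imbalanced - uvec m) $ i\<bar>)"
    by (rule norm_le_l1_cart)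
  also have "\<dots> = \<bar>F 0 - Aup m\<bar> + \<bar>F 1 + Aup m + cm m\<bar> + \<bar>F 2 - cm m\<bar>"
    unfolding UNIV3 by (simp add: payoff_vec_def uvec_simps F_def algebra_simps)
  also have "\<dots> \<le> 4 * q" using a0 a1 a2 by linarith
  also have "4 * q = 6 * (real m * (2/3) ^ m)"
  proof -
    obtain k where k: "m = Suc k" using m by (cases m) auto
    show ?thesis unfolding q_def k by (simp add: power_divide field_simps)
  qed
  finally show ?thesis .
qed

theorem mainTheorem2:
  shows "\<exists>u :: nat \<Rightarrow> real^3.
     (\<forall>m \<ge> 2. \<forall>\<phi> :: 3 multiset \<Rightarrow> 3. is_RPS m \<phi> \<longrightarrow> majorizes (u m) (payoff_vec m \<phi>))
   \<and> ((\<lambda>m. norm (payoff_vec m imbalanced - u m)) \<longlongrightarrow> 0) at_top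
   \<and> (\<lambda>m. norm (payoff_vec m imbalanced - u m)) \<in> O(\<lambda>m. real m * (2/3) ^ m)"
proof (intro exI[of _ uvec] conjI)
  show "\<forall>m \<ge> 2. \<forall>\<phi> :: 3 multiset \<Rightarrow> 3. is_RPS m \<phi> \<longrightarrow> majorizes (uvec m) (payoff_vec m \<phi>)"
  proof (intro allI impI)
    fix m :: nat and \<phi> :: "3 multiset \<Rightarrow> 3"
    assume m: "m \<ge> 2" and rps: "is_RPS m \<phi>"
    have m1: "m \<ge> 1" using m by simp
    show "majorizes (uvec m) (payoff_vec m \<phi>)"
    proof (rule maj3)
      fix i
      show "payoff_vec m \<phi> $ i \<le> uvec m $ 0" using upper[of m \<phi> i] by (simp add: payoff_vec_def uvec_simps)
      show "uvec m $ 2 \<le> payoff_vec m \<phi> $ i" using lower[OF rps m1, of i] by (simp add: payoff_vec_def uvec_simps)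
    next
      have "(\<Sum>i\<in>UNIV. payoff_vec m \<phi> $ i) = 0" using zero_sum[OF rps m1] by (simp add: payoff_vec_def)
      moreover have "(\<Sum>i\<in>UNIV. uvec m $ i) = 0" unfolding UNIV3 by (simp add: uvec_simps)
      ultimately show "(\<Sum>i\<in>UNIV. uvec m $ i) = (\<Sum>i\<in>UNIV. payoff_vec m \<phi> $ i)" by simp
    qed
  qed
  have ev: "eventually (\<lambda>m. norm (payoff_vec m imbalanced - uvec m) \<le> 6 * (real m * (2/3) ^ m)) at_top"
    using bnd eventually_at_top_linorder by blast
  have lim: "((\<lambda>m::nat. 6 * (real m * (2/3) ^ m)) \<longlongrightarrow> (0::real)) at_top"
    by real_asymp
  show "((\<lambda>m. norm (payoff_vec m imbalanced - uvec m)) \<longlongrightarrow> 0) at_top"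
    by (rule tendsto_sandwich[OF _ ev tendsto_const lim]) simp
  show "(\<lambda>m. norm (payoff_vec m imbalanced - uvec m)) \<in> O(\<lambda>m. real m * (2/3) ^ m)"
  proof (rule bigoI[where c=6])
    show "eventually (\<lambda>m. norm (norm (payoff_vec m imbalanced - uvec m)) \<le> 6 * norm (real m * (2/3::real) ^ m)) at_top"
      using ev by simp
  qed
qed
end
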